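(* Let $0=t_0<\dots<t_N=T$, $\tau_k=t_k-t_{k-1}$, $r_k=\tau_k/\tau_{k-1}$ ($2\le k\le N$). Let $r_{\max}\approx4.8645$ be the positive root of $x^3=(2x+1)^2$, fix $\delta\in(0,r_{\max})$ and assume $r_2>0$ and $0<r_k\le r_{\max}-\delta$ for $3\le k\le N$. Then the DOC kernels $\theta^{(n)}_{n-k}$ ($n\ge2$) are positive definite; more precisely, for any real sequence $\{\omega_j\}_{j=1}^n$ and $2\le n\le N$, $$2\sum_{k=2}^n\omega_k\sum_{j=2}^k\theta^{(k)}_{k-j}\omega_j\ge C_r\delta\sum_{k=2}^n\tau_k^{-1}\Big(\sum_{j=2}^k\theta^{(k)}_{k-j}\omega_j\Big)^2,$$ where $C_r=\sqrt{r_{\max}}/(1+r_{\max})^2$.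
   Context: BDF2 kernels: $b^{(1)}_0=1/\tau_1$; for $n\ge2$, $b^{(n)}_0=\frac{1+2r_n}{\tau_n(1+r_n)}$, $b^{(n)}_1=-\frac{r_n^2}{\tau_n(1+r_n)}$, $b^{(n)}_j=0$ for $2\le j\le n-1$. The discrete orthogonal convolution (DOC) kernels $\theta^{(n)}_{n-j}$ ($1\le j\le n$) are defined by $\sum_{j=k}^n\theta^{(n)}_{n-j}b^{(j)}_{j-k}=\delta_{nk}$ (Kronecker delta) for all $1\le k\le n$. *)

theory Defs
  imports Complex_Main
begin

definition tau :: "(nat \<Rightarrow> real) \<Rightarrow> nat \<Rightarrow> real" where
  "tau t k = t k - t (k - 1)"

definition ratio :: "(nat \<Rightarrow> real) \<Rightarrow> nat \<Rightarrow> real" where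
  "ratio t k = tau t k / tau t (k - 1)"

text \<open>BDF2 kernel: bdf2 t n k denotes b^{(n)}_{n-k} for 1 <= k <= n.\<close>
definition bdf2 :: "(nat \<Rightarrow> real) \<Rightarrow> nat \<Rightarrow> nat \<Rightarrow> real" where
  "bdf2 t n k =
     (if n = 1 then (if k = 1 then 1 / tau t 1 else 0)
      else if k = n then (1 + 2 * ratio t n) / (tau t n * (1 + ratio t n))
      else if Suc k = n then - (ratio t n ^ 2) / (tau t n * (1 + ratio t n))
      else 0)"

text \<open>DOC kernels: theta n j denotes theta^{(n)}_{n-j}; they are characterized by
  the discrete orthogonality identity.\<close>
definition is_DOC :: "(nat \<Rightarrow> real) \<Rightarrow> nat \<Rightarrow> (nat \<Rightarrow> nat \<Rightarrow> real) \<Rightarrow> bool" where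
  "is_DOC t N theta \<longleftrightarrow>
     (\<forall>n\<in>{1..N}. \<forall>k\<in>{1..n}.
        (\<Sum>j=k..n. theta n j * bdf2 t j k) = (if n = k then 1 else 0))"

definition r_max :: real where
  "r_max = (THE x. x > 0 \<and> x ^ 3 = (2 * x + 1) ^ 2)"

definition C_r :: real where
  "C_r = sqrt r_max / (1 + r_max) ^ 2"

end

theory Submission
  imports Defs
begin


lemma sig_bounds:
  fixes \<sigma> :: real
  assumes "\<sigma> > 0" "\<sigma>^3 = 2*\<sigma>^2+1"
  shows "2.2 \<le> \<sigma>" "\<sigma> \<le> 2.21"
proof -
  have p: "\<sigma>^2 * (\<sigma> - 2) = 1" using assms(2) by (simp add: algebra_simps power3_eq_cube power2_eq_square)
  have g2: "\<sigma> > 2"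
  proof (rule ccontr)
    assume "\<not> \<sigma> > 2"
    hence "\<sigma>^2 * (\<sigma> - 2) \<le> 0" by (simp add: mult_nonneg_nonpos)
    thus False using p by simp
  qed
  show "2.2 \<le> \<sigma>"
  proof (rule ccontr)
    assume "\<not> 2.2 \<le> \<sigma>"
    hence a: "\<sigma> < 2.2" by simp
    have "\<sigma>^2 \<le> 2.2^2" using a g2 by (intro power_mono) auto
    hence "\<sigma>^2 * (\<sigma> - 2) \<le> 2.2^2 * (\<sigma> - 2)" using g2 by (intro mult_right_mono) auto
    also have "\<dots> < 1" using a by (simp add: power2_eq_square)
    finally show False using p by simp
  qed
  show "\<sigma> \<le> 2.21"
  proof (rule ccontr)
    assume "\<not> \<sigma> \<le> 2.21"
    hence a: "\<sigma> > 2.21" by simp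
    have "2.21^2 \<le> \<sigma>^2" using a by (intro power_mono) auto
    hence "2.21^2 * (\<sigma> - 2) \<le> \<sigma>^2 * (\<sigma> - 2)" using g2 by (intro mult_right_mono) auto
    moreover have "1 < 2.21^2 * (\<sigma> - 2)" using a by (simp add: power2_eq_square)
    ultimately show False using p by simp
  qed
qed

definition ga :: "real \<Rightarrow> real" where "ga s = s^3 / (1 + s^2)"
definition aa :: "real \<Rightarrow> real" where "aa s = 2 * (1 + 2*s^2) / (1 + s^2)"
definition ha :: "real \<Rightarrow> real" where "ha s = aa s - ga s"

lemma ha_eq: "ha s = (2 + 4*s^2 - s^3) / (1 + s^2)"
proof -
  have "ha s = (2 * (1 + 2*s^2) - s^3) / (1 + s^2)"
    unfolding ha_def aa_def ga_def by (simp add: diff_divide_distrib)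
  thus ?thesis by (simp add: algebra_simps)
qed

lemma ga_mono: assumes "0 \<le> S" "S \<le> m" shows "ga S \<le> ga m"
proof -
  have p1: "1 + S^2 > 0" "1 + m^2 > 0" by (simp_all add: add_pos_nonneg)
  have "S^3 \<le> m^3" using assms by (intro power_mono) auto
  moreover have "S^2*m^2*S \<le> S^2*m^2*m" using assms by (intro mult_left_mono) auto
  ultimately have "S^3 * (1 + m^2) \<le> m^3 * (1 + S^2)"
    by (simp add: algebra_simps power3_eq_cube power2_eq_square)
  thus ?thesis unfolding ga_def using p1 by (simp add: divide_simps)
qed

lemma ga_nonneg: "0 \<le> s \<Longrightarrow> 0 \<le> ga s"
  unfolding ga_def by (simp add: add_pos_nonneg)

lemma aa_ge2: "aa s \<ge> 2"
proof -
  have "1 + s^2 > 0" by (simp add: add_pos_nonneg)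
  thus ?thesis unfolding aa_def by (simp add: divide_simps)
qed

lemma ha_ge2: assumes "0 \<le> s" "s \<le> 2" shows "ha s \<ge> 2"
proof -
  have p: "1 + s^2 > 0" by (simp add: add_pos_nonneg)
  have "s^2 * s \<le> s^2 * 2" using assms by (intro mult_left_mono) auto
  hence "2 * (1 + s^2) \<le> 2 + 4*s^2 - s^3" by (simp add: power3_eq_cube power2_eq_square)
  thus ?thesis unfolding ha_eq using p by (simp add: divide_simps)
qed

lemma ha_le2: assumes "2 \<le> m" shows "ha m \<le> 2"
proof -
  have p: "1 + m^2 > 0" by (simp add: add_pos_nonneg)
  have "m^2 * 2 \<le> m^2 * m" using assms by (intro mult_left_mono) auto
  hence "2 + 4*m^2 - m^3 \<le> 2 * (1 + m^2)" by (simp add: power3_eq_cube power2_eq_square)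
  thus ?thesis unfolding ha_eq using p by (simp add: divide_simps)
qed

lemma ha_anti: assumes "1 \<le> s" "s \<le> m" shows "ha m \<le> ha s"
proof -
  have p: "1 + s^2 > 0" "1 + m^2 > 0" by (simp_all add: add_pos_nonneg)
  have m1: "1 \<le> m" using assms by linarith
  have b1: "m \<le> m*s" using mult_left_mono[of 1 s m] assms m1 by simp
  have b2: "s \<le> s*s" using mult_left_mono[of 1 s s] assms by simp
  have b3: "m \<le> m*m" using mult_left_mono[of 1 m m] m1 by simp
  have mm1: "1 \<le> m*m" using b3 m1 by linarith
  have "1 \<le> s*(m*m)" using mult_mono[of 1 s 1 "m*m"] mm1 assms by simp
  hence b4: "s \<le> s*s*m*m" using mult_left_mono[of 1 "s*(m*m)" s] assms by (simp add: mult.assoc)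
  have br: "0 \<le> m*m + m*s + s*s + s*s*m*m - 2*m - 2*s" using b1 b2 b3 b4 by linarith
  have "0 \<le> (m - s) * (m*m + m*s + s*s + s*s*m*m - 2*m - 2*s)"
    using br assms by (intro mult_nonneg_nonneg) auto
  hence "(2 + 4*m^2 - m^3) * (1 + s^2) \<le> (2 + 4*s^2 - s^3) * (1 + m^2)"
    by (simp add: algebra_simps power3_eq_cube power2_eq_square)
  thus ?thesis unfolding ha_eq using p by (simp add: divide_simps)
qed

lemma ha_lower: assumes "0 \<le> s" "s \<le> m" "2 \<le> m" shows "ha m \<le> ha s"
proof (cases "s \<le> 2")
  case True thus ?thesis using ha_ge2[of s] ha_le2[of m] assms by linarith
next
  case False thus ?thesis using ha_anti[of s m] assms by simp
qed

lemma phi_bound: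
  fixes \<sigma> m :: real
  assumes "\<sigma> > 0" "\<sigma>^3 = 2*\<sigma>^2+1" "2 \<le> m" "m < \<sigma>"
  shows "ha m - ga m \<ge> (\<sigma>^2 - m^2) / 15"
proof -
  note sb = sig_bounds[OF assms(1,2)]
  have p: "1 + m^2 > 0" by (simp add: add_pos_nonneg)
  have e1: "ha m - ga m = 2 * (1 + 2*m^2 - m^3) / (1 + m^2)"
    unfolding ha_eq ga_def by (simp add: diff_divide_distrib[symmetric] algebra_simps)
  have e2: "1 + 2*m^2 - m^3 = (\<sigma> - m) * (\<sigma>*\<sigma> + \<sigma>*m + m*m - 2*\<sigma> - 2*m)"
    using assms(2) by (simp add: algebra_simps power3_eq_cube power2_eq_square)
  have "\<sigma>*\<sigma> + \<sigma>*m + m*m - 2*\<sigma> - 2*m = \<sigma>*(\<sigma>-2) + m*(\<sigma>-2) + m*m" by (simp add: algebra_simps)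
  also have "\<dots> \<ge> 4"
  proof -
    have "\<sigma>*(\<sigma>-2) \<ge> 0" "m*(\<sigma>-2) \<ge> 0" using sb assms by auto
    moreover have "m*m \<ge> 2*2" using assms by (intro mult_mono) auto
    ultimately show ?thesis by linarith
  qed
  finally have e3: "1 + 2*m^2 - m^3 \<ge> (\<sigma> - m) * 4" unfolding e2 using assms by (intro mult_left_mono) auto
  have mm: "m^2 \<le> \<sigma>^2" using assms by (intro power_mono) auto
  have s2: "\<sigma>^2 \<le> 2.21^2" using sb assms by (intro power_mono) auto
  have "(\<sigma>^2 - m^2) / 15 = (\<sigma> - m) * (\<sigma> + m) / 15" by (simp add: algebra_simps power2_eq_square)
  also have "\<dots> \<le> (\<sigma> - m) * 4.42 / 15"
    using assms sb by (intro divide_right_mono mult_left_mono) auto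
  also have "\<dots> \<le> (\<sigma> - m) * 8 / (1 + m^2)"
  proof -
    have "(2.21::real)^2 \<le> 5" by (simp add: power2_eq_square)
    hence "1 + m^2 \<le> 6" using mm s2 by linarith
    hence "4.42 / 15 \<le> 8 / (1 + m^2)" using p by (simp add: divide_simps)
    hence "(\<sigma> - m) * (4.42 / 15) \<le> (\<sigma> - m) * (8 / (1 + m^2))" using assms by (intro mult_left_mono) auto
    thus ?thesis by simp
  qed
  also have "\<dots> \<le> 2 * (1 + 2*m^2 - m^3) / (1 + m^2)"
    using e3 p by (intro divide_right_mono) auto
  finally show ?thesis using e1 by simp
qed

lemma coeff:
  fixes \<sigma> m \<delta> s S :: real
  assumes "\<sigma> > 0" "\<sigma>^3 = 2*\<sigma>^2+1" "0 \<le> m" "m^2 = \<sigma>^2 - \<delta>" "0 < \<delta>"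
    and "0 \<le> S" "S \<le> m" "0 \<le> s"
  shows "aa s - ga S \<ge> \<delta>/15" and "s \<le> m \<Longrightarrow> ha s - ga S \<ge> \<delta>/15"
proof -
  note sb = sig_bounds[OF assms(1,2)]
  have s2: "\<sigma>^2 \<le> 2.21^2" using sb assms by (intro power_mono) auto
  have dl: "\<delta> < 5" proof -
    have "(2.21::real)^2 < 5" by (simp add: power2_eq_square)
    moreover have "0 \<le> m^2" by simp
    ultimately show ?thesis using s2 assms(4) by linarith
  qed
  have mlt: "m < \<sigma>"
  proof (rule ccontr)
    assume "\<not> m < \<sigma>"
    hence "\<sigma>^2 \<le> m^2" using assms(1) by (intro power_mono) auto
    thus False using assms(4,5) by linarith
  qed
  have gS: "ga S \<le> ga m" using ga_mono assms(6,7) by blast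
  have ga2: "ga 2 = 8/5" unfolding ga_def by (simp add: power2_eq_square power3_eq_cube)
  have aa2: "aa s \<ge> 2" by (rule aa_ge2)
  have "aa s - ga S \<ge> \<delta>/15 \<and> (s \<le> m \<longrightarrow> ha s - ga S \<ge> \<delta>/15)"
  proof (cases "m \<le> 2")
    case True
    have "ga m \<le> ga 2" using ga_mono True assms(3) by blast
    hence g8: "ga m \<le> 8/5" using ga2 by linarith
    have "s \<le> m \<longrightarrow> ha s \<ge> 2" using ha_ge2 True assms(8) by force
    thus ?thesis using aa2 gS dl g8 by linarith
  next
    case False
    have ph: "ha m - ga m \<ge> (\<sigma>^2 - m^2) / 15" using phi_bound[OF assms(1,2)] False mlt by force
    have h2: "ha m \<le> 2" using ha_le2 False by force
    have "s \<le> m \<longrightarrow> ha m \<le> ha s" using ha_lower False assms(8) by force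
    thus ?thesis using aa2 gS ph assms(4) h2 by auto
  qed
  thus "aa s - ga S \<ge> \<delta>/15" "s \<le> m \<Longrightarrow> ha s - ga S \<ge> \<delta>/15" by auto
qed



lemma rmax_char: "r_max > 4 \<and> r_max^3 = (2*r_max+1)^2"
proof -
  let ?P = "\<lambda>x::real. x > 0 \<and> x^3 = (2*x+1)^2"
  let ?f = "\<lambda>x::real. x^3 - (2*x+1)^2"
  have "\<exists>x. 4 \<le> x \<and> x \<le> 5 \<and> ?f x = 0"
    by (rule IVT) (auto intro!: continuous_intros simp: power2_eq_square power3_eq_cube)
  then obtain x where x: "4 \<le> x" "?f x = 0" by blast
  have ex: "?P x" using x by simp
  have gt4: "x > 4" if "?P x" for x
  proof (rule ccontr)
    assume "\<not> x > 4"
    hence a: "x^2 * x \<le> x^2 * 4" using that by (intro mult_left_mono) auto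
    have b: "x^3 = x^2*x" by (simp add: power3_eq_cube power2_eq_square)
    have c: "(2*x+1)^2 = 4*x^2 + 4*x + 1" by (simp add: power2_eq_square algebra_simps)
    have "x^3 < (2*x+1)^2" using a b c that by linarith
    thus False using that by simp
  qed
  have uq: "x = y" if "?P x" "?P y" for x y
  proof (rule ccontr)
    have lem: False if a: "?P x" "?P y" "x < y" for x y
    proof -
      have x4: "x > 4" "y > 4" using gt4 a by auto
      have "y^3 - x^3 = (y - x) * (y*y + x*y + x*x)" by (simp add: algebra_simps power3_eq_cube)
      moreover have "(2*y+1)^2 - (2*x+1)^2 = (y - x) * (4*y + 4*x + 4)" by (simp add: algebra_simps power2_eq_square)
      ultimately have "(y - x) * (y*y + x*y + x*x) = (y - x) * (4*y + 4*x + 4)" using a by simp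
      hence e: "y*y + x*y + x*x = 4*y + 4*x + 4" using a by simp
      have "y*y > 4*y" "x*x > 4*x" using x4 by auto
      moreover have "x*y > 4*4" using x4 by (intro mult_strict_mono) auto
      ultimately show False using e by linarith
    qed
    assume "x \<noteq> y"
    hence "x < y \<or> y < x" by auto
    thus False using lem that by blast
  qed
  have "?P (THE x. ?P x)" by (rule theI[of ?P x, OF ex uq[OF _ ex]])
  hence "?P r_max" unfolding r_max_def .
  thus ?thesis using gt4 by auto
qed

lemma sigma_props: "sqrt r_max > 0" "(sqrt r_max)^2 = r_max" "(sqrt r_max)^3 = 2*(sqrt r_max)^2+1"
proof -
  have r: "r_max > 4" "r_max^3 = (2*r_max+1)^2" using rmax_char by auto
  show "sqrt r_max > 0" using r by simp
  show s2: "(sqrt r_max)^2 = r_max" using r by simp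
  have "((sqrt r_max)^3)^2 = (2*(sqrt r_max)^2+1)^2"
  proof -
    have "((sqrt r_max)^3)^2 = ((sqrt r_max)^2)^3" by (simp flip: power_mult add: mult.commute)
    thus ?thesis using r s2 by simp
  qed
  moreover have "0 \<le> (sqrt r_max)^3" "0 \<le> 2*(sqrt r_max)^2+1" using r by auto
  ultimately show "(sqrt r_max)^3 = 2*(sqrt r_max)^2+1" by (rule power2_eq_imp_eq)
qed

lemma Cr_le: "C_r \<le> 1/15"
proof -
  note sp = sigma_props
  define \<sigma> where "\<sigma> = sqrt r_max"
  have sb: "2.2 \<le> \<sigma>" "\<sigma> \<le> 2.21" using sig_bounds[OF sp(1) sp(3)] unfolding \<sigma>_def by auto
  have C: "C_r = \<sigma> / (1 + \<sigma>^2)^2" unfolding C_r_def \<sigma>_def using sp by simp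
  have "2.2^2 \<le> \<sigma>^2" using sb by (intro power_mono) auto
  hence "5.84 \<le> 1 + \<sigma>^2" by (simp add: power2_eq_square)
  hence "5.84^2 \<le> (1 + \<sigma>^2)^2" by (intro power_mono) auto
  hence q: "34 \<le> (1 + \<sigma>^2)^2" by (simp add: power2_eq_square)
  have "\<sigma> / (1 + \<sigma>^2)^2 \<le> 1/15" using q sb by (simp add: divide_simps)
  thus ?thesis using C by simp
qed

lemma alg0: fixes B B1 c x y z :: real
  assumes "B1 \<noteq> 0" "x*B1 + y*c = 0" "y*B = 1" "z*B1 = 1" shows "B*x + c*z = 0"
proof -
  have h: "x*B1 = -(y*c)" using assms(2) by linarith
  have "(B*x + c*z) * B1 = B*(x*B1) + c*(z*B1)" by (simp add: algebra_simps)
  also have "\<dots> = -((y*B)*c) + c" unfolding h using assms(4) by (simp add: algebra_simps)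
  also have "\<dots> = 0" using assms(3) by simp
  finally show ?thesis using assms(1) by simp
qed

lemma alg1: fixes B c D e x y x1 y1 :: real
  assumes "D \<noteq> 0" "x1*D + x*e = 0" "y1*D + y*e = 0" "B*x + c*y = 0" shows "B*x1 + c*y1 = 0"
proof -
  have h1: "x1*D = -(x*e)" using assms(2) by linarith
  have h2: "y1*D = -(y*e)" using assms(3) by linarith
  have "(B*x1 + c*y1) * D = B*(x1*D) + c*(y1*D)" by (simp add: algebra_simps)
  also have "\<dots> = -((B*x + c*y)*e)" unfolding h1 h2 by (simp add: algebra_simps)
  also have "\<dots> = 0" using assms(4) by simp
  finally show ?thesis using assms(1) by simp
qed

lemma term_base: fixes s T v :: real assumes "T > 0"
  shows "2 * (((1+2*s^2)/(T*(1+s^2))) * v) * v = aa s * v^2 / T"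
proof -
  have "1 + s^2 > 0" by (simp add: add_pos_nonneg)
  thus ?thesis unfolding aa_def using assms by (simp add: field_simps power2_eq_square)
qed

lemma term_ineq: fixes s T v w :: real assumes "s > 0" "T > 0"
  shows "2 * (((1+2*s^2)/(T*(1+s^2))) * v + (-((s^2)^2)/(T*(1+s^2))) * w) * v
         \<ge> ha s * v^2 / T - ga s * w^2 / (T / s^2)"
proof -
  have p: "1 + s^2 > 0" by (simp add: add_pos_nonneg)
  define q where "q = 1 / (T*(1+s^2))"
  have q0: "q > 0" using p assms unfolding q_def by simp
  have e1: "(1+2*s^2)/(T*(1+s^2)) = (1+2*s^2)*q" unfolding q_def by simp
  have e2: "-((s^2)^2)/(T*(1+s^2)) = -(s^4)*q" unfolding q_def by simp
  have e3: "ha s * v^2 / T = (2+4*s^2-s^3)*v^2*q" unfolding q_def ha_eq by simp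
  have e4: "ga s * w^2 / (T / s^2) = s^5*w^2*q" unfolding q_def ga_def using assms
    by (simp add: eval_nat_numeral mult_ac)
  have "2 * ((1+2*s^2)*q * v + (-(s^4)*q) * w) * v - ((2+4*s^2-s^3)*v^2*q - s^5*w^2*q)
        = s^3 * (v - s*w)^2 * q"
    by (simp add: algebra_simps power2_eq_square power3_eq_cube eval_nat_numeral)
  moreover have "s^3 * (v - s*w)^2 * q \<ge> 0" using assms q0 by simp
  ultimately show ?thesis unfolding e1 e2 e3 e4 by linarith
qed



theorem mainTheorem5:
  fixes t :: "nat \<Rightarrow> real" and N n :: nat and \<delta> :: real
    and theta :: "nat \<Rightarrow> nat \<Rightarrow> real" and \<omega> :: "nat \<Rightarrow> real"
  assumes t0: "t 0 = 0"
    and incr: "\<forall>k\<in>{1..N}. t (k - 1) < t k"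
    and delta: "0 < \<delta>" "\<delta> < r_max"
    and r2: "ratio t 2 > 0"
    and rk: "\<forall>k\<in>{3..N}. 0 < ratio t k \<and> ratio t k \<le> r_max - \<delta>"
    and doc: "is_DOC t N theta"
    and n: "2 \<le> n" "n \<le> N"
  shows "2 * (\<Sum>k=2..n. \<omega> k * (\<Sum>j=2..k. theta k j * \<omega> j))
         \<ge> C_r * \<delta> * (\<Sum>k=2..n. (1 / tau t k) * (\<Sum>j=2..k. theta k j * \<omega> j) ^ 2)"
proof -
  define b where "b = bdf2 t"
  define v where "v k = (\<Sum>j=2..k. theta k j * \<omega> j)" for k
  define s where "s k = sqrt (ratio t k)" for k
  have tpos: "tau t k > 0" if "1 \<le> k" "k \<le> N" for k
    using incr that unfolding tau_def by auto
  have rpos: "ratio t k > 0" if "2 \<le> k" "k \<le> N" for k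
    using tpos[of k] tpos[of "k-1"] that unfolding ratio_def by auto
  have spos: "s k > 0" if "2 \<le> k" "k \<le> N" for k
    using rpos[OF that] unfolding s_def by simp
  have ssq: "(s k)^2 = ratio t k" if "2 \<le> k" "k \<le> N" for k
    using rpos[OF that] unfolding s_def by simp
  have taurel: "tau t (k-1) = tau t k / (s k)^2" if "2 \<le> k" "k \<le> N" for k
    using ssq[OF that] tpos[of k] tpos[of "k-1"] that unfolding ratio_def by auto
  have bkk: "b k k = (1 + 2*(s k)^2) / (tau t k * (1 + (s k)^2))" if "2 \<le> k" "k \<le> N" for k
    unfolding b_def bdf2_def ssq[OF that] using that by simp
  have bk1: "b k (k-1) = (-(((s k)^2)^2)) / (tau t k * (1 + (s k)^2))" if "2 \<le> k" "k \<le> N" for k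
  proof -
    have "Suc (k-1) = k" "k - 1 \<noteq> k" "k \<noteq> 1" using that by auto
    thus ?thesis unfolding b_def bdf2_def ssq[OF that] by simp
  qed
  have b0: "b j i = 0" if "2 \<le> j" "i \<noteq> j" "Suc i \<noteq> j" for i j
    unfolding b_def bdf2_def using that by simp
  have bpos: "b k k > 0" if "2 \<le> k" "k \<le> N" for k
  proof -
    have "0 < (1 + 2*(s k)^2)" "0 < tau t k * (1 + (s k)^2)"
      using tpos[of k] that by (auto intro!: add_pos_nonneg mult_pos_pos)
    thus ?thesis unfolding bkk[OF that] by simp
  qed
  have dsum: "(\<Sum>j=k..n'. theta n' j * b j k) = (if n' = k then 1 else 0)"
    if "1 \<le> k" "k \<le> n'" "n' \<le> N" for k n'
    using doc that unfolding is_DOC_def b_def by auto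
  have d1: "theta k k * b k k = 1" if "2 \<le> k" "k \<le> N" for k
    using dsum[of k k] that by simp
  have d2: "theta n' k * b k k + theta n' (Suc k) * b (Suc k) k = 0"
    if "2 \<le> k" "k < n'" "n' \<le> N" for k n'
  proof -
    have "(\<Sum>j=k..n'. theta n' j * b j k) = 0" using dsum[of k n'] that by simp
    moreover have "(\<Sum>j=k..n'. theta n' j * b j k)
        = theta n' k * b k k + (theta n' (Suc k) * b (Suc k) k + (\<Sum>j=Suc (Suc k)..n'. theta n' j * b j k))"
      using that by (simp add: sum.atLeast_Suc_atMost)
    moreover have "(\<Sum>j=Suc (Suc k)..n'. theta n' j * b j k) = 0"
      by (rule sum.neutral) (use b0 that in auto)
    ultimately show ?thesis by simp
  qed
  have xlem: "b k k * theta k (k-1-d) + b k (k-1) * theta (k-1) (k-1-d) = 0"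
    if "3 \<le> k" "k \<le> N" "d \<le> k - 3" for k d
    using that(3)
  proof (induction d)
    case 0
    have "k - 1 \<noteq> 0" "Suc (k-1) = k" using that by auto
    have e1: "theta k (k-1) * b (k-1) (k-1) + theta k k * b k (k-1) = 0"
      using d2[of "k-1" k] that \<open>Suc (k-1) = k\<close> by simp
    have e2: "theta k k * b k k = 1" using d1 that by simp
    have e3: "theta (k-1) (k-1) * b (k-1) (k-1) = 1" using d1[of "k-1"] that by simp
    have e4: "b (k-1) (k-1) \<noteq> 0"
    proof -
      have "2 \<le> k-1" "k-1 \<le> N" using that by auto
      from bpos[OF this] show ?thesis by simp
    qed
    show ?case using alg0[OF e4 e1 e2 e3] by simp
  next
    case (Suc d)
    define i where "i = k - 1 - Suc d"
    have ii: "Suc i = k - 1 - d" "2 \<le> i" "i < k - 1" using Suc.prems that unfolding i_def by auto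
    have IH: "b k k * theta k (Suc i) + b k (k-1) * theta (k-1) (Suc i) = 0"
      using Suc ii by simp
    have e1: "theta k i * b i i + theta k (Suc i) * b (Suc i) i = 0"
      using d2[of i k] ii that by simp
    have e2: "theta (k-1) i * b i i + theta (k-1) (Suc i) * b (Suc i) i = 0"
      using d2[of i "k-1"] ii that by simp
    have e4: "b i i \<noteq> 0"
    proof -
      have "2 \<le> i" "i \<le> N" using ii that by auto
      from bpos[OF this] show ?thesis by simp
    qed
    show ?case using alg1[OF e4 e1 e2 IH] unfolding i_def by simp
  qed
  have omk: "\<omega> k = b k k * v k + b k (k-1) * v (k-1)" if "3 \<le> k" "k \<le> N" for k
  proof -
    have ins: "{2..k} = insert k {2..k-1}" using that by auto
    have vk: "v k = (\<Sum>j=2..k-1. theta k j * \<omega> j) + theta k k * \<omega> k"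
      unfolding v_def ins using that by (simp add: add.commute)
    have "b k k * v k + b k (k-1) * v (k-1)
        = (\<Sum>j=2..k-1. (b k k * theta k j + b k (k-1) * theta (k-1) j) * \<omega> j) + (theta k k * b k k) * \<omega> k"
      unfolding vk by (simp add: v_def algebra_simps sum_distrib_left sum.distrib)
    also have "(\<Sum>j=2..k-1. (b k k * theta k j + b k (k-1) * theta (k-1) j) * \<omega> j) = 0"
    proof (rule sum.neutral, rule ballI)
      fix j assume j: "j \<in> {2..k-1}"
      have "k - 1 - (k - 1 - j) = j" "k - 1 - j \<le> k - 3" using j that by auto
      thus "(b k k * theta k j + b k (k-1) * theta (k-1) j) * \<omega> j = 0"
        using xlem[of k "k-1-j"] that by simp
    qed
    also have "theta k k * b k k = 1" using d1 that by simp
    finally show ?thesis by simp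
  qed
  have om2: "\<omega> 2 = b 2 2 * v 2"
  proof -
    have "v 2 = theta 2 2 * \<omega> 2" unfolding v_def by simp
    thus ?thesis using d1[of 2] n by (simp add: algebra_simps)
  qed
  define X where "X k = (v k)^2 / tau t k" for k
  have X0: "X k \<ge> 0" if "1 \<le> k" "k \<le> N" for k
    unfolding X_def using tpos[OF that] by simp
  have pt: "2 * (\<omega> k * v k) \<ge> ha (s k) * X k - ga (s k) * X (k-1)" if "3 \<le> k" "k \<le> N" for k
  proof -
    have k2: "2 \<le> k" using that by simp
    have "2 * (\<omega> k * v k) = 2 * (((1+2*(s k)^2)/(tau t k*(1+(s k)^2))) * v k
          + (-(((s k)^2)^2)/(tau t k*(1+(s k)^2))) * v (k-1)) * v k"
      unfolding omk[OF that] bkk[OF k2 that(2)] bk1[OF k2 that(2)] by simp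
    also have "\<dots> \<ge> ha (s k) * (v k)^2 / tau t k - ga (s k) * (v (k-1))^2 / (tau t k / (s k)^2)"
      by (rule term_ineq) (use spos[OF k2 that(2)] tpos[of k] that in auto)
    finally show ?thesis unfolding X_def taurel[OF k2 that(2)] by simp
  qed
  have N2: "(2::nat) \<le> N" using n by simp
  have p2: "2 * (\<omega> 2 * v 2) = aa (s 2) * X 2"
  proof -
    have "2 * (\<omega> 2 * v 2) = 2 * (((1+2*(s 2)^2)/(tau t 2*(1+(s 2)^2))) * v 2) * v 2"
      unfolding om2 bkk[OF order_refl N2] by simp
    also have "\<dots> = aa (s 2) * (v 2)^2 / tau t 2"
      by (rule term_base) (use tpos[of 2] n in auto)
    finally show ?thesis unfolding X_def by simp
  qed
  define \<sigma> where "\<sigma> = sqrt r_max"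
  define m where "m = sqrt (r_max - \<delta>)"
  define \<epsilon> where "\<epsilon> = \<delta> / 15"
  have sg0: "\<sigma> > 0" and sg3: "\<sigma>^3 = 2*\<sigma>^2+1" and sg2: "\<sigma>^2 = r_max"
    using sigma_props unfolding \<sigma>_def by auto
  have m0: "0 \<le> m" using delta unfolding m_def by simp
  have msq: "m^2 = \<sigma>^2 - \<delta>" using delta sg2 unfolding m_def by simp
  have sle: "s k \<le> m" "0 \<le> s k" if "3 \<le> k" "k \<le> N" for k
  proof -
    have "ratio t k \<le> r_max - \<delta>" using rk that by auto
    thus "s k \<le> m" unfolding s_def m_def by (rule real_sqrt_le_mono)
    show "0 \<le> s k" using spos[of k] that by simp
  qed
  have s20: "0 \<le> s 2" using spos[OF order_refl N2] by simp
  have rm5: "r_max < 5"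
  proof -
    have "\<sigma> \<le> 2.21" using sig_bounds[OF sg0 sg3] by simp
    hence "\<sigma>^2 \<le> 2.21^2" using sg0 by (intro power_mono) auto
    moreover have "(2.21::real)^2 < 5" by (simp add: power2_eq_square)
    ultimately show ?thesis using sg2 by linarith
  qed
  have eps3: "\<epsilon> < 1/3" using delta rm5 unfolding \<epsilon>_def by simp
  define A where "A k = (if k = 2 then aa (s k) else ha (s k))" for k
  have cA: "A k - ga (s (Suc k)) \<ge> \<epsilon>" if "2 \<le> k" "Suc k \<le> N" for k
  proof (cases "k = 2")
    case True
    have "aa (s 2) - ga (s (Suc k)) \<ge> \<delta>/15"
      by (rule coeff(1)[OF sg0 sg3 m0 msq delta(1)]) (use sle[of "Suc k"] that s20 in auto)
    thus ?thesis using True unfolding A_def \<epsilon>_def by simp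
  next
    case False
    have "ha (s k) - ga (s (Suc k)) \<ge> \<delta>/15"
      by (rule coeff(2)[OF sg0 sg3 m0 msq delta(1)]) (use sle[of "Suc k"] sle[of k] that False in auto)
    thus ?thesis using False unfolding A_def \<epsilon>_def by simp
  qed
  have cAn: "A k \<ge> \<epsilon>" if "2 \<le> k" "k \<le> N" for k
  proof (cases "k = 2")
    case True
    thus ?thesis using aa_ge2[of "s 2"] eps3 unfolding A_def by simp
  next
    case False
    have "ha (s k) - ga (s k) \<ge> \<delta>/15"
      by (rule coeff(2)[OF sg0 sg3 m0 msq delta(1)]) (use sle[of k] that False in auto)
    moreover have "ga (s k) \<ge> 0" using ga_nonneg sle[of k] that False by simp
    ultimately show ?thesis using False unfolding A_def \<epsilon>_def by simp
  qed
  have IND: "n' \<le> N \<Longrightarrow> (\<Sum>k=2..n'. 2 * (\<omega> k * v k)) \<ge> \<epsilon> * (\<Sum>k=2..n'-1. X k) + A n' * X n'"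
    if "2 \<le> n'" for n'
    using that
  proof (induction n' rule: nat_induct_at_least)
    case base
    show ?case using p2 unfolding A_def by simp
  next
    case (Suc n')
    have le: "n' \<le> N" using Suc by simp
    have IH: "(\<Sum>k=2..n'. 2 * (\<omega> k * v k)) \<ge> \<epsilon> * (\<Sum>k=2..n'-1. X k) + A n' * X n'"
      using Suc.IH le by simp
    have s1: "(\<Sum>k=2..Suc n'. 2 * (\<omega> k * v k)) = (\<Sum>k=2..n'. 2 * (\<omega> k * v k)) + 2 * (\<omega> (Suc n') * v (Suc n'))"
      using Suc.hyps by simp
    have ins: "{2..n'} = insert n' {2..n'-1}" using Suc.hyps by auto
    have s2: "(\<Sum>k=2..Suc n' - 1. X k) = (\<Sum>k=2..n'-1. X k) + X n'"
      using Suc.hyps by (simp add: ins add.commute)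
    have ptS: "2 * (\<omega> (Suc n') * v (Suc n')) \<ge> ha (s (Suc n')) * X (Suc n') - ga (s (Suc n')) * X n'"
      using pt[of "Suc n'"] Suc by simp
    have c: "A n' - ga (s (Suc n')) \<ge> \<epsilon>" using cA Suc by simp
    have Xn: "X n' \<ge> 0" using X0[of n'] Suc by simp
    have "(A n' - ga (s (Suc n'))) * X n' \<ge> \<epsilon> * X n'" using c Xn by (rule mult_right_mono)
    hence d: "A n' * X n' - ga (s (Suc n')) * X n' \<ge> \<epsilon> * X n'" by (simp add: algebra_simps)
    have AS: "A (Suc n') = ha (s (Suc n'))" using Suc.hyps unfolding A_def by simp
    show ?case unfolding s1 s2 AS using IH ptS d by (simp add: algebra_simps)
  qed
  have main: "(\<Sum>k=2..n. 2 * (\<omega> k * v k)) \<ge> \<epsilon> * (\<Sum>k=2..n. X k)"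
  proof -
    have ins: "{2..n} = insert n {2..n-1}" using n by auto
    have s2: "(\<Sum>k=2..n. X k) = (\<Sum>k=2..n-1. X k) + X n"
      using n by (simp add: ins add.commute)
    have "A n * X n \<ge> \<epsilon> * X n" using cAn[OF n] X0[of n] n by (intro mult_right_mono) auto
    thus ?thesis using IND[OF n] unfolding s2 by (simp add: algebra_simps)
  qed
  have Xs: "(\<Sum>k=2..n. X k) \<ge> 0" using X0 n by (intro sum_nonneg) auto
  have "C_r * \<delta> \<le> \<epsilon>" using Cr_le delta unfolding \<epsilon>_def by simp
  hence "C_r * \<delta> * (\<Sum>k=2..n. X k) \<le> \<epsilon> * (\<Sum>k=2..n. X k)" using Xs by (rule mult_right_mono)
  also have "\<dots> \<le> (\<Sum>k=2..n. 2 * (\<omega> k * v k))" by (rule main)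
  also have "\<dots> = 2 * (\<Sum>k=2..n. \<omega> k * v k)" by (simp add: sum_distrib_left)
  finally have fin: "2 * (\<Sum>k=2..n. \<omega> k * v k) \<ge> C_r * \<delta> * (\<Sum>k=2..n. (1 / tau t k) * (v k)^2)"
    unfolding X_def by simp
  thus ?thesis unfolding v_def .
qed

end
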